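(* Let $m,k$ be positive integers with $\gcd(k,m)=1$, $m$ odd and $m>k+2$. For $z\in\mathbb{F}_{2^k}$ define $f^{(z)}:\mathbb{F}_{2^m}\times\mathbb{F}_{2^m}\to\mathbb{F}_2$ by $f^{(z)}(x_1,x_2)={\rm Tr}_1^m(x_1x_2^{2^k+1})$ if ${\rm Tr}_1^k(z)=0$ and $f^{(z)}(x_1,x_2)={\rm Tr}_1^m(x_2x_1^{2^k+1})$ if ${\rm Tr}_1^k(z)=1$. Then $f:\mathbb{F}_{2^m}\times\mathbb{F}_{2^m}\times\mathbb{F}_{2^k}\times\mathbb{F}_{2^k}\to\mathbb{F}_2$, $f(x_1,x_2,y,z)=f^{(z)}(x_1,x_2)+{\rm Tr}_1^k(yz)$, is a GMM function that is not in the class $MM^{\#}$.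
   Context: ${\rm Tr}_a^b$ denotes the trace from $\mathbb{F}_{2^b}$ to $\mathbb{F}_{2^a}$. A GMM (generalized Maiorana–McFarland) function is one of the form $f(x,y,z)=f^{(z)}(x)+{\rm Tr}_1^k(yz)$ on $W\times\mathbb{F}_{2^k}\times\mathbb{F}_{2^k}$ with every $f^{(z)}$ bent on $W$. Two Boolean functions $f,g$ on an $\mathbb{F}_2$-space $X$ are EA-equivalent if $g(x)=f(L(x)+a)+\langle c,x\rangle+b$ with $L$ a linear permutation of $X$, $a,c\in X$, $b\in\mathbb{F}_2$. The Maiorana–McFarland class on $\mathbb{F}_{2^N}\times\mathbb{F}_{2^N}$ consists of functions ${\rm Tr}_1^N(x\pi(y))+g(y)$ with $\pi$ a permutation of $\mathbb{F}_{2^N}$ and $g$ arbitrary; $MM^{\#}$ is the set of Boolean functions on a $2N$-dimensional $\mathbb{F}_2$-space EA-equivalent (after a linear identification with $\mathbb{F}_{2^N}^2$) to such a function. *)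

theory Defs
  imports Main "HOL-Library.Z2" "HOL-Library.Product_Plus"
begin

text \<open>Absolute trace Tr_1^n of a field element, with value in F_2 (type bit).
  Tr n x = x + x^2 + ... + x^(2^(n-1)); for x in a field of order 2^n this lies in {0,1}.\<close>
definition Tr :: "nat \<Rightarrow> 'a::field \<Rightarrow> bit" where
  "Tr n x = (if (\<Sum>i<n. x ^ (2 ^ i)) = 0 then 0 else 1)"

text \<open>F_2-linear maps between F_2-spaces (= additive maps, as every scalar is 0 or 1).\<close>
definition f2_linear :: "('a::ab_group_add \<Rightarrow> 'b::ab_group_add) \<Rightarrow> bool" where
  "f2_linear L \<longleftrightarrow> (\<forall>x y. L (x + y) = L x + L y)"

definition chi :: "bit \<Rightarrow> int" where
  "chi b = (if b = 0 then 1 else -1)"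

text \<open>Walsh transform, indexed by the linear functional x |-> <u,x>.\<close>
definition walsh :: "('w::{finite,ab_group_add} \<Rightarrow> bit) \<Rightarrow> ('w \<Rightarrow> bit) \<Rightarrow> int" where
  "walsh f l = (\<Sum>x\<in>UNIV. chi (f x + l x))"

definition bent :: "('w::{finite,ab_group_add} \<Rightarrow> bit) \<Rightarrow> bool" where
  "bent f \<longleftrightarrow> (\<forall>l. f2_linear l \<longrightarrow> (walsh f l)^2 = int (card (UNIV :: 'w set)))"

definition is_GMM :: "nat \<Rightarrow> ('w::{finite,ab_group_add} \<times> 'b::{field,finite} \<times> 'b \<Rightarrow> bit) \<Rightarrow> bool" where
  "is_GMM k f \<longleftrightarrow> (\<exists>F :: 'b \<Rightarrow> 'w \<Rightarrow> bit. (\<forall>z. bent (F z)) \<and>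
      (\<forall>x y z. f (x, y, z) = F z x + Tr k (y * z)))"

definition EA_equiv :: "('x::ab_group_add \<Rightarrow> bit) \<Rightarrow> ('x \<Rightarrow> bit) \<Rightarrow> bool" where
  "EA_equiv f g \<longleftrightarrow> (\<exists>L a l b. f2_linear L \<and> bij L \<and> f2_linear (l :: 'x \<Rightarrow> bit) \<and>
      (\<forall>x. g x = f (L x + a) + l x + b))"

text \<open>MM^# relative to a field 'c of order 2^N: after a linear identification phi of the
  space with 'c x 'c, the function is EA-equivalent to Tr_1^N(x pi(y)) + g(y).\<close>
definition MM_sharp :: "nat \<Rightarrow> 'c::{field,finite} itself \<Rightarrow> ('x::ab_group_add \<Rightarrow> bit) \<Rightarrow> bool" where
  "MM_sharp N _ h \<longleftrightarrow> (\<exists>(phi :: 'x \<Rightarrow> 'c \<times> 'c) (pi :: 'c \<Rightarrow> 'c) (g :: 'c \<Rightarrow> bit).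
      f2_linear phi \<and> bij phi \<and> bij pi \<and>
      EA_equiv (\<lambda>(x, y). Tr N (x * pi y) + g y) (h \<circ> inv phi))"

end

theory Submission
  imports Defs "HOL-Computational_Algebra.Polynomial"
begin

lemma fermat:
  fixes x :: "'a::{field,finite}"
  shows "x ^ card (UNIV::'a set) = x"
proof (cases "x = 0")
  case True
  have "card (UNIV::'a set) > 0" by (simp add: card_gt_0_iff)
  then show ?thesis using True by (simp add: power_0_left)
next
  case False
  let ?A = "UNIV - {0::'a}"
  have bij: "bij_betw (\<lambda>y. x * y) ?A ?A"
    unfolding bij_betw_def inj_on_def
  proof
    show "\<forall>a\<in>?A. \<forall>b\<in>?A. x * a = x * b \<longrightarrow> a = b" using False by auto
    show "(*) x ` ?A = ?A"
    proof
      show "(*) x ` ?A \<subseteq> ?A" using False by auto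
      show "?A \<subseteq> (*) x ` ?A"
      proof
        fix y assume "y \<in> ?A"
        then have "y = x * (y / x)" "y / x \<in> ?A" using False by auto
        then show "y \<in> (*) x ` ?A" by blast
      qed
    qed
  qed
  have "(\<Prod>y\<in>?A. x * y) = (\<Prod>y\<in>?A. y)"
    using prod.reindex_bij_betw[OF bij, of "\<lambda>y. y"] by simp
  moreover have "(\<Prod>y\<in>?A. x * y) = x ^ card ?A * (\<Prod>y\<in>?A. y)"
    by (simp add: prod.distrib)
  moreover have "(\<Prod>y\<in>?A. y) \<noteq> 0" by (simp add: prod_zero_iff)
  ultimately have "x ^ card ?A = 1" by simp
  moreover have "card ?A + 1 = card (UNIV::'a set)"
    using card_Diff_singleton[of "0::'a" "UNIV::'a set"] by (simp add: card_gt_0_iff)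
  ultimately show ?thesis by (metis power_Suc2 Suc_eq_plus1 mult_1)
qed

lemma char2:
  assumes "card (UNIV::'a::{field,finite} set) = 2 ^ n" "n > 0"
  shows "(2::'a) = 0"
proof -
  have "(-1::'a) ^ (2 ^ n) = -1" using fermat[of "-1::'a"] assms by simp
  moreover have "even ((2::nat) ^ n)" using assms by simp
  ultimately have "(1::'a) = -1" by (metis neg_one_even_power)
  then show ?thesis by (metis add_eq_0_iff2 one_add_one)
qed

lemma char2_add_self:
  assumes "(2::'a::field) = 0" shows "x + x = (0::'a)"
  by (metis assms mult_2 mult_zero_left)

lemma char2_minus:
  assumes "(2::'a::field) = 0" shows "- x = (x::'a)"
  by (metis assms char2_add_self add_eq_0_iff2)

lemma frob_add:
  assumes "(2::'a::field) = 0"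
  shows "(x + y) ^ (2 ^ j) = x ^ (2 ^ j) + (y::'a) ^ (2 ^ j)"
proof (induction j)
  case 0 then show ?case by simp
next
  case (Suc j)
  have sq: "(a + b)^2 = a^2 + (b::'a)^2" for a b
  proof -
    have "(a + b)^2 = a^2 + b^2 + 2 * a * b" by (simp add: power2_sum)
    then show ?thesis using assms by simp
  qed
  have "(x + y) ^ (2 ^ Suc j) = ((x + y) ^ (2 ^ j))^2" by (simp add: power_mult[symmetric] mult.commute)
  also have "\<dots> = (x ^ (2 ^ j))^2 + (y ^ (2 ^ j))^2" using Suc sq by simp
  also have "\<dots> = x ^ (2 ^ Suc j) + y ^ (2 ^ Suc j)" by (simp add: power_mult[symmetric] mult.commute)
  finally show ?case .
qed

definition S :: "nat \<Rightarrow> 'a::field \<Rightarrow> 'a" where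
  "S n x = (\<Sum>i<n. x ^ (2 ^ i))"

lemma Tr_S: "Tr n x = (if S n x = 0 then 0 else 1)"
  by (simp add: Tr_def S_def)

lemma S_add:
  assumes "(2::'a::field) = 0"
  shows "S n (x + y) = S n x + S n (y::'a)"
  by (simp add: S_def frob_add[OF assms] sum.distrib)

lemma sum_sq:
  fixes n :: nat
  assumes "(2::'a::field) = 0"
  shows "(\<Sum>i<n. a i)^2 = (\<Sum>i<n. (a i :: 'a)^2)"
proof (induction n)
  case 0 then show ?case by simp
next
  case (Suc n)
  then show ?case using frob_add[OF assms, of _ _ 1] by simp
qed

lemma S_sq:
  assumes "card (UNIV::'a::{field,finite} set) = 2 ^ n" "n > 0"
  shows "(S n (x::'a))^2 = S n x"
proof -
  have c2: "(2::'a) = 0" using char2 assms by blast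
  have "(S n x)^2 = (\<Sum>i<n. (x ^ (2^i))^2)" unfolding S_def by (rule sum_sq[OF c2])
  also have "\<dots> = (\<Sum>i<n. x ^ (2^Suc i))" by (simp add: power_mult[symmetric] mult.commute)
  finally have a: "(S n x)^2 = (\<Sum>i<n. x ^ (2^Suc i))" .
  have "(\<Sum>i<Suc n. x ^ (2^i)) = x ^ (2^0) + (\<Sum>i<n. x ^ (2^Suc i))"
    by (rule sum.lessThan_Suc_shift)
  moreover have "(\<Sum>i<Suc n. x ^ (2^i)) = S n x + x ^ (2^n)" by (simp add: S_def)
  moreover have "x ^ (2^n) = x" using fermat[of x] assms by simp
  ultimately show ?thesis using a by (simp add: add.commute)
qed

lemma S_01:
  assumes "card (UNIV::'a::{field,finite} set) = 2 ^ n" "n > 0"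
  shows "S n (x::'a) = 0 \<or> S n x = 1"
proof -
  have "S n x * (S n x - 1) = 0" using S_sq[OF assms, of x] by (simp add: algebra_simps power2_eq_square)
  then show ?thesis by auto
qed

lemma Tr_add:
  assumes "card (UNIV::'a::{field,finite} set) = 2 ^ n" "n > 0"
  shows "Tr n (x + y) = Tr n x + Tr n (y::'a)"
proof -
  have c2: "(2::'a) = 0" using char2 assms by blast
  have "S n (x+y) = S n x + S n y" by (rule S_add[OF c2])
  moreover have "(1::'a) + 1 = 0" using c2 by simp
  ultimately show ?thesis unfolding Tr_S using S_01[OF assms, of x] S_01[OF assms, of y]
    by auto
qed

lemma Tr_zero: "Tr n (0::'a::field) = 0"
  by (simp add: Tr_def zero_power)

lemma Tr_surj:
  assumes "card (UNIV::'a::{field,finite} set) = 2 ^ n" "n > 0"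
  shows "\<exists>x::'a. Tr n x = 1"
proof -
  define p :: "'a poly" where "p = (\<Sum>i<n. monom 1 (2^i))"
  have ev: "poly p x = S n x" for x by (simp add: p_def poly_sum poly_monom S_def)
  have "coeff p (2^(n-1)) = (\<Sum>i<n. if 2^i = (2::nat)^(n-1) then 1 else 0)"
    by (simp add: p_def coeff_sum)
  also have "\<dots> = (\<Sum>i<n. if i = n - 1 then 1 else 0)"
    by (intro sum.cong refl) simp
  also have "\<dots> = 1" using assms(2) by simp
  finally have "p \<noteq> 0" by auto
  then have "card {x. poly p x = 0} \<le> degree p" by (rule card_poly_roots_bound)
  also have "degree p \<le> 2^(n-1)"
    unfolding p_def
  proof (rule degree_sum_le)
    fix i assume "i \<in> {..<n}"
    then have "(2::nat)^i \<le> 2^(n-1)" by (intro power_increasing) auto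
    then show "degree (monom (1::'a) (2^i)) \<le> 2^(n-1)" by (simp add: degree_monom_eq)
  qed simp
  also have "(2::nat)^(n-1) < 2^n" using assms(2) by simp
  finally have "card {x. poly p x = 0} < card (UNIV::'a set)" using assms by simp
  then have "{x. poly p x = 0} \<noteq> UNIV" by auto
  then obtain x where "poly p x \<noteq> 0" by auto
  then have "S n x \<noteq> 0" using ev by simp
  then show ?thesis by (auto simp: Tr_S)
qed


declare add_bit_eq_xor[simp del] mult_bit_eq_and[simp del]

lemma chi_add: "chi (a + b) = chi a * chi b"
  by (cases a; cases b) (simp_all add: chi_def)

lemma chi_sq: "(chi a)^2 = 1"
  by (cases a) (simp_all add: chi_def)

lemma f2_linear_zero: "f2_linear L \<Longrightarrow> L 0 = 0"
  unfolding f2_linear_def by (metis add.right_neutral add_left_cancel)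

lemma chi_sum_lin:
  fixes \<phi> :: "'w::{finite,ab_group_add} \<Rightarrow> bit"
  assumes "f2_linear \<phi>"
  shows "(\<Sum>x\<in>UNIV. chi (\<phi> x)) = (if \<forall>x. \<phi> x = 0 then int (card (UNIV::'w set)) else 0)"
proof (cases "\<forall>x. \<phi> x = 0")
  case True then show ?thesis by (simp add: chi_def)
next
  case False
  then obtain x0 where x0: "\<phi> x0 = 1" by auto
  have bij: "bij_betw (\<lambda>x. x + x0) UNIV UNIV"
    unfolding bij_betw_def inj_on_def by (auto intro!: image_eqI[where x="_ - x0"])
  have "(\<Sum>x\<in>UNIV. chi (\<phi> (x + x0))) = (\<Sum>x\<in>UNIV. chi (\<phi> x))"
    using sum.reindex_bij_betw[OF bij, of "\<lambda>x. chi (\<phi> x)"] by simp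
  moreover have "chi (\<phi> (x + x0)) = - chi (\<phi> x)" for x
    using assms x0 unfolding f2_linear_def by (simp add: chi_add chi_def)
  ultimately have "(\<Sum>x\<in>UNIV. - chi (\<phi> x)) = (\<Sum>x\<in>UNIV. chi (\<phi> x))" by simp
  then have "(\<Sum>x\<in>UNIV. chi (\<phi> x)) = 0" by (simp add: sum_negf)
  then show ?thesis using False by simp
qed

lemma bit_add_eq0: "(a::bit) + b = 0 \<longleftrightarrow> a = b"
  by (cases a; cases b) simp_all

lemma Tr_nondeg:
  assumes "card (UNIV::'a::{field,finite} set) = 2 ^ n" "n > 0" "(c::'a) \<noteq> 0"
  shows "\<exists>x. Tr n (x * c) = 1"
proof -
  obtain z :: 'a where "Tr n z = 1" using Tr_surj[OF assms(1,2)] by blast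
  then have "Tr n ((z / c) * c) = 1" using assms(3) by simp
  then show ?thesis by blast
qed

lemma Tr_lin:
  assumes "card (UNIV::'a::{field,finite} set) = 2 ^ n" "n > 0"
  shows "f2_linear (\<lambda>x::'a. Tr n (x * c))" "f2_linear (\<lambda>x::'a. Tr n (c * x))"
  unfolding f2_linear_def using Tr_add[OF assms] by (simp_all add: algebra_simps)

lemma Tr_charsum:
  assumes "card (UNIV::'a::{field,finite} set) = 2 ^ n" "n > 0"
  shows "(\<Sum>c\<in>UNIV. chi (Tr n ((x::'a) * c))) = (if x = 0 then int (card (UNIV::'a set)) else 0)"
proof -
  have "(\<forall>c. Tr n (x * c) = 0) \<longleftrightarrow> x = 0"
  proof
    assume "\<forall>c. Tr n (x * c) = 0"
    then show "x = 0" using Tr_nondeg[OF assms, of x] by (auto simp: mult.commute)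
  qed (simp add: Tr_zero)
  then show ?thesis using chi_sum_lin[OF Tr_lin(2)[OF assms, of x]] by simp
qed

lemma Tr_repr:
  assumes "card (UNIV::'a::{field,finite} set) = 2 ^ n" "n > 0" "f2_linear (l1 :: 'a \<Rightarrow> bit)"
  shows "\<exists>!c. \<forall>x. l1 x = Tr n (x * c)"
proof -
  have c2: "(2::'a) = 0" using char2 assms by blast
  have lin: "f2_linear (\<lambda>x. l1 x + Tr n (x * c))" for c
    using assms(3) Tr_add[OF assms(1,2)] unfolding f2_linear_def by (simp add: algebra_simps)
  have "(\<Sum>c\<in>UNIV. \<Sum>x\<in>UNIV. chi (l1 x + Tr n (x * c)))
      = (\<Sum>x\<in>UNIV. chi (l1 x) * (\<Sum>c\<in>UNIV. chi (Tr n (x * c))))"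
    by (subst sum.swap) (simp add: chi_add sum_distrib_left)
  also have "\<dots> = (\<Sum>x::'a\<in>UNIV. (if x = 0 then chi (l1 0) * int (card (UNIV::'a set)) else 0))"
    by (rule sum.cong[OF refl]) (simp add: Tr_charsum[OF assms(1,2)])
  also have "\<dots> = int (card (UNIV::'a set))"
    using f2_linear_zero[OF assms(3)] by (simp add: chi_def)
  finally have eq: "(\<Sum>c\<in>UNIV. \<Sum>x\<in>UNIV. chi (l1 x + Tr n (x * c))) = int (card (UNIV::'a set))" .
  have ex: "\<exists>c. \<forall>x. l1 x = Tr n (x * c)"
  proof (rule ccontr)
    assume "\<not> (\<exists>c. \<forall>x. l1 x = Tr n (x * c))"
    then have nc: "\<forall>c. \<not> (\<forall>x. l1 x + Tr n (x * c) = 0)" by (simp add: bit_add_eq0)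
    have "(\<Sum>c\<in>UNIV. \<Sum>x\<in>UNIV. chi (l1 x + Tr n (x * c))) = 0"
    proof (rule sum.neutral, rule ballI)
      fix c :: 'a assume "c \<in> UNIV"
      have "\<not> (\<forall>x. l1 x + Tr n (x * c) = 0)" using nc by blast
      then show "(\<Sum>x\<in>UNIV. chi (l1 x + Tr n (x * c))) = 0"
        using chi_sum_lin[OF lin, of c] by argo
    qed
    then show False using eq by (simp add: card_gt_0_iff)
  qed
  have uq: "c = c'" if h1: "\<forall>x. l1 x = Tr n (x * c)" and h2: "\<forall>x. l1 x = Tr n (x * c')" for c c'
  proof -
  have "Tr n (x * (c + c')) = 0" for x
    using h1 h2 Tr_add[OF assms(1,2), of "x*c" "x*c'"] by (simp add: distrib_left bit_add_eq0)
  then have "c + c' = 0" using Tr_nondeg[OF assms(1,2), of "c + c'"] by auto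
  then show "c = c'" using char2_minus[OF c2, of c'] by (metis add_eq_0_iff2)
  qed
  show ?thesis using ex uq by blast
qed

lemma pow2_mult: "(w::'a::monoid_mult) ^ (2 ^ (r + s)) = (w ^ (2 ^ s)) ^ (2 ^ r)"
proof -
  have "(2::nat) ^ (r + s) = 2 ^ s * 2 ^ r" by (simp add: power_add mult.commute)
  then show ?thesis by (simp add: power_mult)
qed

lemma frob_iter:
  assumes "(w::'a::monoid_mult) ^ (2 ^ b) = w"
  shows "w ^ (2 ^ (j * b)) = w"
proof (induction j)
  case 0 then show ?case by simp
next
  case (Suc j)
  have "w ^ (2 ^ (Suc j * b)) = (w ^ (2 ^ b)) ^ (2 ^ (j * b))"
    using pow2_mult[of w "j*b" b] by (simp add: add.commute)
  then show ?case using assms Suc by simp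
qed

lemma frob_gcd:
  fixes w :: "'a::monoid_mult"
  shows "w ^ (2 ^ a) = w \<Longrightarrow> w ^ (2 ^ b) = w \<Longrightarrow> w ^ (2 ^ gcd a b) = w"
proof (induction a b rule: gcd_nat_induct)
  case (base m) then show ?case by simp
next
  case (step m n)
  have "m = m mod n + (m div n) * n" by simp
  then have "w = (w ^ (2 ^ ((m div n) * n))) ^ (2 ^ (m mod n))"
    using step.prems(1) pow2_mult[of w "m mod n" "(m div n) * n"] by metis
  then have "w ^ (2 ^ (m mod n)) = w" using frob_iter[OF step.prems(2)] by simp
  then have "w ^ (2 ^ gcd n (m mod n)) = w" using step by blast
  then show ?case by (simp add: gcd_red_nat[symmetric])
qed

lemma frob_coprime:
  fixes w :: "'a::field"
  assumes "w ^ (2 ^ a) = w" "w ^ (2 ^ b) = w" "coprime a b" "w \<noteq> 0"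
  shows "w = 1"
proof -
  have "w ^ 2 = w" using frob_gcd[OF assms(1,2)] assms(3) by (simp add: coprime_iff_gcd_eq_1)
  then show ?thesis using assms(4) by (simp add: power2_eq_square)
qed

lemma pi_inj:
  assumes "card (UNIV::'a::{field,finite} set) = 2 ^ m" "coprime k m" "odd m"
  shows "inj (\<lambda>x::'a. x ^ (2 ^ k + 1))"
proof
  fix x y :: 'a assume eq: "x ^ (2 ^ k + 1) = y ^ (2 ^ k + 1)"
  have cop: "coprime (2 * k) m" using assms(2,3) by (simp add: coprime_mult_left_iff)
  show "x = y"
  proof (cases "y = 0")
    case True then show ?thesis using eq by simp
  next
    case False
    then have "x \<noteq> 0" using eq by auto
    define w where "w = x / y"
    have w0: "w \<noteq> 0" using \<open>x \<noteq> 0\<close> False by (simp add: w_def)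
    have "w ^ (2 ^ k + 1) = 1" using eq False by (simp add: w_def power_divide)
    then have "w * w ^ (2 ^ k) = 1" by simp
    then have wi: "w ^ (2 ^ k) = inverse w" using w0 by (simp add: field_simps)
    have "w ^ (2 ^ (2 * k)) = (w ^ (2 ^ k)) ^ (2 ^ k)" using pow2_mult[of w k k] by (simp add: mult_2)
    also have "\<dots> = w" using wi by (simp add: power_inverse)
    finally have a: "w ^ (2 ^ (2 * k)) = w" .
    have b: "w ^ (2 ^ m) = w" using fermat[of w] assms(1) by simp
    have "w = 1" using frob_coprime[OF a b cop w0] .
    then show ?thesis using False by (simp add: w_def)
  qed
qed

lemma bent_MM:
  assumes "card (UNIV::'a::{field,finite} set) = 2 ^ n" "n > 0" "bij (\<pi> :: 'a \<Rightarrow> 'a)"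
  shows "bent (\<lambda>(x1::'a, x2::'a). Tr n (x1 * \<pi> x2))"
  unfolding bent_def
proof (intro allI impI)
  fix l :: "'a \<times> 'a \<Rightarrow> bit" assume l: "f2_linear l"
  define l1 where "l1 x = l (x, 0)" for x
  define l2 where "l2 x = l (0, x)" for x
  have lsplit: "l (x1, x2) = l1 x1 + l2 x2" for x1 x2
  proof -
    have "(x1, x2) = (x1, 0) + (0, x2)" by simp
    then show ?thesis using l unfolding f2_linear_def l1_def l2_def by metis
  qed
  have l1lin: "f2_linear l1" using l unfolding f2_linear_def l1_def by (metis add.right_neutral add_Pair)
  obtain c0 where c0: "\<forall>x. l1 x = Tr n (x * c0)" using Tr_repr[OF assms(1,2) l1lin] by blast
  have c0u: "\<And>c. (\<forall>x. l1 x = Tr n (x * c)) \<Longrightarrow> c = c0" using Tr_repr[OF assms(1,2) l1lin] c0 by blast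
  define x0 where "x0 = inv \<pi> c0"
  have px0: "\<pi> x0 = c0" using assms(3) by (simp add: x0_def bij_is_surj surj_f_inv_f)
  have inner: "(\<Sum>x1\<in>UNIV. chi (Tr n (x1 * \<pi> x2) + l1 x1))
      = (if x2 = x0 then int (card (UNIV::'a set)) else 0)" for x2
  proof -
    have lin: "f2_linear (\<lambda>x1. Tr n (x1 * \<pi> x2) + l1 x1)"
      using l1lin Tr_add[OF assms(1,2)] unfolding f2_linear_def by (simp add: algebra_simps)
    have "(\<forall>x1. Tr n (x1 * \<pi> x2) + l1 x1 = 0) \<longleftrightarrow> x2 = x0"
    proof
      assume "\<forall>x1. Tr n (x1 * \<pi> x2) + l1 x1 = 0"
      then have "\<forall>x. l1 x = Tr n (x * \<pi> x2)" by (simp add: bit_add_eq0)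
      then have "\<pi> x2 = \<pi> x0" using c0u px0 by simp
      then show "x2 = x0" using assms(3) by (simp add: bij_def inj_eq)
    next
      assume "x2 = x0" then show "\<forall>x1. Tr n (x1 * \<pi> x2) + l1 x1 = 0"
        using c0 px0 by (simp add: bit_add_eq0)
    qed
    then show ?thesis using chi_sum_lin[OF lin] by simp
  qed
  have "walsh (\<lambda>(x1, x2). Tr n (x1 * \<pi> x2)) l
      = (\<Sum>(x1, x2)\<in>UNIV \<times> UNIV. chi (Tr n (x1 * \<pi> x2) + l (x1, x2)))"
    by (simp add: walsh_def UNIV_Times_UNIV case_prod_beta)
  also have "\<dots> = (\<Sum>x1\<in>UNIV. \<Sum>x2\<in>UNIV. chi (Tr n (x1 * \<pi> x2) + l (x1, x2)))"
    by (simp add: sum.cartesian_product)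
  also have "\<dots> = (\<Sum>x2\<in>UNIV. chi (l2 x2) * (\<Sum>x1\<in>UNIV. chi (Tr n (x1 * \<pi> x2) + l1 x1)))"
    by (subst sum.swap) (simp add: lsplit chi_add sum_distrib_left algebra_simps)
  also have "\<dots> = (\<Sum>x2\<in>UNIV. if x2 = x0 then chi (l2 x0) * int (card (UNIV::'a set)) else 0)"
    by (rule sum.cong[OF refl]) (simp add: inner)
  also have "\<dots> = chi (l2 x0) * int (card (UNIV::'a set))"
    by simp
  finally have "(walsh (\<lambda>(x1, x2). Tr n (x1 * \<pi> x2)) l)^2 = (int (card (UNIV::'a set)))^2"
    by (simp add: power_mult_distrib chi_sq)
  then show "(walsh (\<lambda>(x1, x2). Tr n (x1 * \<pi> x2)) l)^2 = int (card (UNIV :: ('a \<times> 'a) set))"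
    by (simp add: UNIV_Times_UNIV[symmetric] card_cartesian_product power2_eq_square del: UNIV_Times_UNIV)
qed

lemma bent_swap:
  assumes "bent (F :: ('a::{finite,ab_group_add} \<times> 'a) \<Rightarrow> bit)"
  shows "bent (\<lambda>(x1, x2). F (x2, x1))"
  unfolding bent_def
proof (intro allI impI)
  fix l :: "'a \<times> 'a \<Rightarrow> bit" assume l: "f2_linear l"
  have l': "f2_linear (\<lambda>(x1, x2). l (x2, x1))"
    using l unfolding f2_linear_def by auto
  have bij: "bij_betw (\<lambda>(x1, x2). (x2, x1)) (UNIV :: ('a \<times> 'a) set) UNIV"
    by (rule bij_betw_byWitness[where f'="\<lambda>(x1, x2). (x2, x1)"]) auto
  have "walsh (\<lambda>(x1, x2). F (x2, x1)) l = walsh F (\<lambda>(x1, x2). l (x2, x1))"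
    unfolding walsh_def
    using sum.reindex_bij_betw[OF bij, of "\<lambda>p. chi (F p + (\<lambda>(x1, x2). l (x2, x1)) p)"]
    by (simp add: case_prod_beta)
  then show "(walsh (\<lambda>(x1, x2). F (x2, x1)) l)^2 = int (card (UNIV :: ('a \<times> 'a) set))"
    using assms l' unfolding bent_def by simp
qed

lemma bit_double: "(a::bit) + a = 0"
  by (cases a) simp_all

lemma bit_double_left: "(a::bit) + (a + b) = b"
  by (cases a; cases b) simp_all

lemma bit8: "((a::bit) + b + c + d + (e + f + g) + h) + (a + b + d + (e + f) + h) + (a + c + d + (e + g) + h)
   + (a + d + e + h) = 0"
  by (cases a; cases b; cases c; cases d; cases e; cases f; cases g; cases h) simp_all

lemma lin_diff: "f2_linear L \<Longrightarrow> L (x - y) = L x - L y"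
  unfolding f2_linear_def by (metis add_diff_cancel diff_add_cancel eq_diff_eq)

lemma inv_lin:
  assumes "f2_linear L" "bij L"
  shows "f2_linear (inv L)"
  unfolding f2_linear_def
proof (intro allI)
  fix x y
  have "L (inv L x + inv L y) = x + y"
    using assms unfolding f2_linear_def by (simp add: bij_is_surj surj_f_inv_f)
  then show "inv L (x + y) = inv L x + inv L y"
    using assms(2) by (metis bij_is_inj inv_f_f)
qed

lemma pair_shift:
  fixes r a :: "'a::ab_group_add \<times> 'b::ab_group_add"
  shows "r + (x, 0) + (x', 0) + a = (fst (r + a) + x + x', snd (r + a))"
  "r + (x, 0) + a = (fst (r + a) + x, snd (r + a))"
  by (simp_all add: prod_eq_iff algebra_simps)

lemma MM_sharp_flat:
  assumes "card (UNIV::'c::{field,finite} set) = 2 ^ N" "N > 0"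
    and "MM_sharp N TYPE('c) (h :: 'x::ab_group_add \<Rightarrow> bit)"
  shows "\<exists>Nf :: 'c \<Rightarrow> 'x. f2_linear Nf \<and> inj Nf \<and>
    (\<forall>p x x'. h (p + Nf x + Nf x') + h (p + Nf x) + h (p + Nf x') + h p = 0)"
proof -
  obtain phi :: "'x \<Rightarrow> 'c \<times> 'c" and pi :: "'c \<Rightarrow> 'c" and g :: "'c \<Rightarrow> bit" where
    ph: "f2_linear phi" "bij phi" and
    EA: "EA_equiv (\<lambda>(x, y). Tr N (x * pi y) + g y) (h \<circ> inv phi)"
    using assms(3) unfolding MM_sharp_def by blast
  obtain L a l b where L: "f2_linear L" "bij L" and l: "f2_linear (l :: 'c \<times> 'c \<Rightarrow> bit)"
    and eq: "\<forall>w. (h \<circ> inv phi) w = (\<lambda>(x, y). Tr N (x * pi y) + g y) (L w + a) + l w + b"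
    using EA unfolding EA_equiv_def by blast
  have hp: "h p = Tr N (fst (L (phi p) + a) * pi (snd (L (phi p) + a))) + g (snd (L (phi p) + a))
      + l (phi p) + b" for p
    using eq[rule_format, of "phi p"] ph(2) by (simp add: bij_is_inj case_prod_beta)
  define Nf where "Nf x = inv phi (inv L (x, 0))" for x
  have iphi: "f2_linear (inv phi)" by (rule inv_lin[OF ph])
  have iL: "f2_linear (inv L)" by (rule inv_lin[OF L])
  have Nlin: "f2_linear Nf"
    using iphi iL unfolding f2_linear_def Nf_def by (metis add_Pair add.right_neutral)
  have Ninj: "inj Nf"
    unfolding Nf_def inj_def
    by (metis L(2) ph(2) Pair_inject bij_inv_eq_iff)
  have phN: "phi (Nf x) = inv L (x, 0)" for x
    using ph(2) by (simp add: Nf_def bij_is_surj surj_f_inv_f)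
  have LiL: "L (inv L r) = r" for r using L(2) by (simp add: bij_is_surj surj_f_inv_f)
  have Tadd: "Tr N (u + v) = Tr N u + Tr N v" for u v :: 'c by (rule Tr_add[OF assms(1,2)])
  have phadd: "phi (u + v) = phi u + phi v" for u v using ph(1) unfolding f2_linear_def by blast
  have Ladd: "L (u + v) = L u + L v" for u v using L(1) unfolding f2_linear_def by blast
  have ladd: "l (u + v) = l u + l v" for u v using l unfolding f2_linear_def by blast
  have flat: "h (p + Nf x + Nf x') + h (p + Nf x) + h (p + Nf x') + h p = 0" for p x x'
  proof -
    define r where "r = L (phi p)"
    define X where "X = fst (r + a)"
    define Y where "Y = snd (r + a)"
    define u where "u = inv L (x, 0)"
    define u' where "u' = inv L (x', 0)"
    have L1: "L (phi (p + Nf x + Nf x')) = r + (x, 0) + (x', 0)"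
      unfolding r_def by (simp only: phadd Ladd phN LiL)
    have L2: "L (phi (p + Nf x)) = r + (x, 0)"
      unfolding r_def by (simp only: phadd Ladd phN LiL)
    have l1: "l (phi (p + Nf x + Nf x')) = l (phi p) + l u + l u'"
      unfolding u_def u'_def by (simp only: phadd ladd phN)
    have l2: "l (phi (p + Nf x)) = l (phi p) + l u"
      unfolding u_def by (simp only: phadd ladd phN)
    have l3: "l (phi (p + Nf x')) = l (phi p) + l u'"
      unfolding u'_def by (simp only: phadd ladd phN)
    have L3: "L (phi (p + Nf x')) = r + (x', 0)"
      unfolding r_def by (simp only: phadd Ladd phN LiL)
    have e1: "h (p + Nf x + Nf x') = Tr N (X * pi Y) + Tr N (x * pi Y) + Tr N (x' * pi Y) + g Y
        + (l (phi p) + l u + l u') + b"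
      using hp[of "p + Nf x + Nf x'"] unfolding L1 l1 pair_shift(1)[of r x x' a] X_def Y_def
      by (simp add: distrib_right Tadd)
    have e2: "h (p + Nf x) = Tr N (X * pi Y) + Tr N (x * pi Y) + g Y + (l (phi p) + l u) + b"
      using hp[of "p + Nf x"] unfolding L2 l2 pair_shift(2)[of r x a] X_def Y_def
      by (simp add: distrib_right Tadd)
    have e3: "h (p + Nf x') = Tr N (X * pi Y) + Tr N (x' * pi Y) + g Y + (l (phi p) + l u') + b"
      using hp[of "p + Nf x'"] unfolding L3 l3 pair_shift(2)[of r x' a] X_def Y_def
      by (simp add: distrib_right Tadd)
    have e4: "h p = Tr N (X * pi Y) + g Y + l (phi p) + b"
      using hp[of p] unfolding X_def Y_def r_def by simp
    show ?thesis unfolding e1 e2 e3 e4 by (rule bit8)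
  qed
  show ?thesis using Nlin Ninj flat by blast
qed

lemma quad_key:
  assumes "card (UNIV::'a::{field,finite} set) = 2 ^ m" "m > 0"
    and h: "\<forall>Y. Tr m ((Y + t + t') * (s + s') ^ (2 ^ k + 1) + (Y + t) * s ^ (2 ^ k + 1)
               + (Y + t') * s' ^ (2 ^ k + 1)) = 0"
  shows "s ^ (2 ^ k) * s' = s * (s'::'a) ^ (2 ^ k)"
proof -
  have c2: "(2::'a) = 0" using char2 assms(1,2) by blast
  define \<beta> where "\<beta> = (s + s') ^ (2 ^ k + 1) + s ^ (2 ^ k + 1) + s' ^ (2 ^ k + 1)"
  define E where "E Y = (Y + t + t') * (s + s') ^ (2 ^ k + 1) + (Y + t) * s ^ (2 ^ k + 1)
               + (Y + t') * s' ^ (2 ^ k + 1)" for Y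
  have EY: "E Y = Y * \<beta> + E 0" for Y by (simp add: E_def \<beta>_def algebra_simps)
  have "Tr m (Y * \<beta>) = 0" for Y
  proof -
    have "Tr m (E Y) = Tr m (Y * \<beta>) + Tr m (E 0)" using EY Tr_add[OF assms(1,2)] by metis
    moreover have "Tr m (E Y) = 0" using h[rule_format, of Y] by (simp add: E_def)
    moreover have "Tr m (E 0) = 0" using h[rule_format, of 0] by (simp add: E_def)
    ultimately show ?thesis by simp
  qed
  then have b0: "\<beta> = 0" using Tr_nondeg[OF assms(1,2), of \<beta>] by auto
  have "(s + s') ^ (2 ^ k + 1) = (s ^ (2 ^ k) + s' ^ (2 ^ k)) * (s + s')"
    using frob_add[OF c2, of s s' k] by simp
  then have "\<beta> = s ^ (2 ^ k) * s' + s * s' ^ (2 ^ k) + 2 * (s ^ (2 ^ k) * s) + 2 * (s' ^ (2 ^ k) * s')"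
    by (simp add: \<beta>_def algebra_simps)
  then have "s ^ (2 ^ k) * s' + s * s' ^ (2 ^ k) = 0" using b0 c2 by simp
  then show ?thesis using char2_minus[OF c2] by (metis add_eq_0_iff2)
qed

lemma frob_eq:
  assumes "card (UNIV::'a::{field,finite} set) = 2 ^ m" "coprime k m"
    and eq: "s ^ (2 ^ k) * s' = s * (s'::'a) ^ (2 ^ k)"
  shows "s = 0 \<or> s' = 0 \<or> s = s'"
proof (cases "s = 0 \<or> s' = 0")
  case True then show ?thesis by blast
next
  case False
  define w where "w = s / s'"
  have w0: "w \<noteq> 0" using False by (simp add: w_def)
  have "w ^ (2 ^ k) = s ^ (2 ^ k) / s' ^ (2 ^ k)" by (simp add: w_def power_divide)
  also have "\<dots> = s / s'" using False eq by (simp add: field_simps)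
  finally have a: "w ^ (2 ^ k) = w" by (simp add: w_def)
  have b: "w ^ (2 ^ m) = w" using fermat[of w] assms(1) by simp
  have "w = 1" by (rule frob_coprime[OF a b assms(2) w0])
  then show ?thesis using False by (simp add: w_def)
qed

lemma card_le2:
  fixes A :: "'a::zero set"
  assumes "\<forall>u\<in>A. \<forall>v\<in>A. u = 0 \<or> v = 0 \<or> u = v"
  shows "card A \<le> 2"
proof (cases "\<exists>u0\<in>A. u0 \<noteq> 0")
  case True
  then obtain u0 where "u0 \<in> A" "u0 \<noteq> 0" by blast
  then have "A \<subseteq> {0, u0}" using assms by blast
  then have "card A \<le> card {0, u0}" by (intro card_mono) auto
  also have "\<dots> \<le> 2" by (simp add: card_insert_if)
  finally show ?thesis .
next
  case False
  then have "A \<subseteq> {0}" by blast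
  then have "card A \<le> card {0::'a}" by (intro card_mono) auto
  then show ?thesis by simp
qed

lemma bit_cancel3: "(a + (c + d)) + (b + c) + (e + d) + (0::bit) = 0 \<Longrightarrow> a + b + e = 0"
  by (cases a; cases b; cases c; cases d; cases e) simp_all

lemma Tr_mult0: "Tr k (y * (0::'a::field)) = 0" "Tr k (0 * (y::'a)) = 0"
  by (simp_all add: Tr_zero)

theorem corollary3p12:
  fixes m k :: nat
    and f :: "('a::{field,finite} \<times> 'a) \<times> 'b::{field,finite} \<times> 'b \<Rightarrow> bit"
  assumes "m > 0" and "k > 0" and "coprime k m" and "odd m" and "m > k + 2"
    and "card (UNIV :: 'a set) = 2 ^ m" and "card (UNIV :: 'b set) = 2 ^ k"
    and "card (UNIV :: 'c::{field,finite} set) = 2 ^ (m + k)"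
    and "\<And>x1 x2 y z. f ((x1, x2), y, z) =
           (if Tr k z = 0 then Tr m (x1 * x2 ^ (2 ^ k + 1)) else Tr m (x2 * x1 ^ (2 ^ k + 1)))
           + Tr k (y * z)"
  shows "is_GMM k f \<and> \<not> MM_sharp (m + k) TYPE('c) f"
proof
  have pibij: "bij (\<lambda>x::'a. x ^ (2 ^ k + 1))"
    using pi_inj[OF assms(6,3,4)] by (simp add: bij_def finite_UNIV_inj_surj)
  have b0: "bent (\<lambda>(x1::'a, x2::'a). Tr m (x1 * x2 ^ (2 ^ k + 1)))"
    using bent_MM[OF assms(6,1) pibij] by simp
  have b1: "bent (\<lambda>(x1::'a, x2::'a). Tr m (x2 * x1 ^ (2 ^ k + 1)))"
    using bent_swap[OF b0] by (simp add: case_prod_beta)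
  define F where "F z = (\<lambda>(x1::'a, x2::'a). if Tr k z = 0 then Tr m (x1 * x2 ^ (2 ^ k + 1))
                          else Tr m (x2 * x1 ^ (2 ^ k + 1)))" for z :: 'b
  have "bent (F z)" for z
  proof (cases "Tr k z = 0")
    case True
    then have "F z = (\<lambda>(x1::'a, x2::'a). Tr m (x1 * x2 ^ (2 ^ k + 1)))" by (simp add: F_def)
    then show ?thesis using b0 by simp
  next
    case False
    then have "F z = (\<lambda>(x1::'a, x2::'a). Tr m (x2 * x1 ^ (2 ^ k + 1)))" by (simp add: F_def)
    then show ?thesis using b1 by simp
  qed
  moreover have "f (x, y, z) = F z x + Tr k (y * z)" for x y z
    by (cases x) (simp add: F_def assms(9))
  ultimately show "is_GMM k f" unfolding is_GMM_def by blast
next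
  show "\<not> MM_sharp (m + k) TYPE('c) f"
  proof
    assume MM: "MM_sharp (m + k) TYPE('c) f"
    obtain Nf :: "'c \<Rightarrow> ('a \<times> 'a) \<times> 'b \<times> 'b" where Nlin: "f2_linear Nf" and Ninj: "inj Nf"
      and flat: "\<And>p x x'. f (p + Nf x + Nf x') + f (p + Nf x) + f (p + Nf x') + f p = 0"
      using MM_sharp_flat[OF assms(8) _ MM] assms(1) by auto
    define sN where "sN x = fst (fst (Nf x))" for x
    define tN where "tN x = snd (fst (Nf x))" for x
    define bN where "bN x = fst (snd (Nf x))" for x
    define cN where "cN x = snd (snd (Nf x))" for x
    have Nx: "Nf x = ((sN x, tN x), bN x, cN x)" for x by (simp add: sN_def tN_def bN_def cN_def)
    have cadd: "f2_linear cN" using Nlin unfolding f2_linear_def cN_def by simp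
    define K0 where "K0 = {x. cN x = 0}"
    obtain z1 :: 'b where z1: "Tr k z1 = 1" using Tr_surj[OF assms(7,2)] by blast
    have Tma: "Tr m (u + v) = Tr m u + Tr m v" for u v :: 'a by (rule Tr_add[OF assms(6,1)])
    have Tka: "Tr k (u + v) = Tr k u + Tr k v" for u v :: 'b by (rule Tr_add[OF assms(7,2)])
    have keys: "sN x ^ (2 ^ k) * sN x' = sN x * sN x' ^ (2 ^ k)" if "x \<in> K0" "x' \<in> K0" for x x'
    proof (rule quad_key[OF assms(6,1)], rule allI)
      fix Y :: 'a
      define s where "s = sN x"
      define s' where "s' = sN x'"
      define t where "t = tN x"
      define t' where "t' = tN x'"
      define b where "b = bN x"
      define b' where "b' = bN x'"
      have Nx': "Nf x = ((s, t), b, 0)" "Nf x' = ((s', t'), b', 0)"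
        using that Nx by (simp_all add: K0_def s_def s'_def t_def t'_def b_def b'_def)
      define p where "p = (((0::'a), Y), (0::'b), z1)"
      have e1: "f (p + Nf x + Nf x') = Tr m ((Y + t + t') * (s + s') ^ (2 ^ k + 1)) + (Tr k (b * z1) + Tr k (b' * z1))"
        unfolding Nx' p_def using z1 by (simp add: assms(9) Tka distrib_right add.assoc)
      have e2: "f (p + Nf x) = Tr m ((Y + t) * s ^ (2 ^ k + 1)) + Tr k (b * z1)"
        unfolding Nx' p_def using z1 by (simp add: assms(9))
      have e3: "f (p + Nf x') = Tr m ((Y + t') * s' ^ (2 ^ k + 1)) + Tr k (b' * z1)"
        unfolding Nx' p_def using z1 by (simp add: assms(9))
      have e4: "f p = 0"
        unfolding p_def using z1 by (simp add: assms(9) Tr_zero)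
      have "Tr m ((Y + t + t') * (s + s') ^ (2 ^ k + 1)) + Tr m ((Y + t) * s ^ (2 ^ k + 1))
          + Tr m ((Y + t') * s' ^ (2 ^ k + 1)) = 0"
        by (rule bit_cancel3) (use flat[of p x x'] in \<open>simp only: e1 e2 e3 e4\<close>)
      then show "Tr m ((Y + tN x + tN x') * (sN x + sN x') ^ (2 ^ k + 1) + (Y + tN x) * sN x ^ (2 ^ k + 1)
               + (Y + tN x') * sN x' ^ (2 ^ k + 1)) = 0"
        by (simp add: Tma s_def s'_def t_def t'_def)
    qed
    have keyt: "tN x ^ (2 ^ k) * tN x' = tN x * tN x' ^ (2 ^ k)" if "x \<in> K0" "x' \<in> K0" for x x'
    proof (rule quad_key[OF assms(6,1)], rule allI)
      fix X :: 'a
      define s where "s = sN x"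
      define s' where "s' = sN x'"
      define t where "t = tN x"
      define t' where "t' = tN x'"
      define b where "b = bN x"
      define b' where "b' = bN x'"
      have Nx': "Nf x = ((s, t), b, 0)" "Nf x' = ((s', t'), b', 0)"
        using that Nx by (simp_all add: K0_def s_def s'_def t_def t'_def b_def b'_def)
      define p where "p = ((X, (0::'a)), (0::'b), (0::'b))"
      have e1: "f (p + Nf x + Nf x') = Tr m ((X + s + s') * (t + t') ^ (2 ^ k + 1)) + (Tr k (b * 0) + Tr k (b' * 0))"
        unfolding Nx' p_def by (simp add: assms(9) Tr_zero add.assoc)
      have e2: "f (p + Nf x) = Tr m ((X + s) * t ^ (2 ^ k + 1)) + Tr k (b * 0)"
        unfolding Nx' p_def by (simp add: assms(9) Tr_zero)
      have e3: "f (p + Nf x') = Tr m ((X + s') * t' ^ (2 ^ k + 1)) + Tr k (b' * 0)"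
        unfolding Nx' p_def by (simp add: assms(9) Tr_zero)
      have e4: "f p = 0"
        unfolding p_def by (simp add: assms(9) Tr_zero)
      have "Tr m ((X + s + s') * (t + t') ^ (2 ^ k + 1)) + Tr m ((X + s) * t ^ (2 ^ k + 1))
          + Tr m ((X + s') * t' ^ (2 ^ k + 1)) = 0"
        by (rule bit_cancel3) (use flat[of p x x'] in \<open>simp only: e1 e2 e3 e4\<close>)
      then show "Tr m ((X + sN x + sN x') * (tN x + tN x') ^ (2 ^ k + 1) + (X + sN x) * tN x ^ (2 ^ k + 1)
               + (X + sN x') * tN x' ^ (2 ^ k + 1)) = 0"
        by (simp add: Tma s_def s'_def t_def t'_def)
    qed
    define SS where "SS = sN ` K0"
    define TT where "TT = tN ` K0"
    have cS: "card SS \<le> 2" unfolding SS_def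
      by (rule card_le2) (use keys frob_eq[OF assms(6,3)] in blast)
    have cT: "card TT \<le> 2" unfolding TT_def
      by (rule card_le2) (use keyt frob_eq[OF assms(6,3)] in blast)
    have "card K0 \<le> card (SS \<times> TT \<times> (UNIV::'b set))"
    proof (rule card_inj_on_le[where f="\<lambda>x. (sN x, tN x, bN x)"])
      show "inj_on (\<lambda>x. (sN x, tN x, bN x)) K0"
      proof (rule inj_onI)
        fix x y assume "x \<in> K0" "y \<in> K0" "(sN x, tN x, bN x) = (sN y, tN y, bN y)"
        then have "Nf x = Nf y" using Nx[of x] Nx[of y] by (simp add: K0_def)
        then show "x = y" using Ninj by (simp add: inj_eq)
      qed
      show "(\<lambda>x. (sN x, tN x, bN x)) ` K0 \<subseteq> SS \<times> TT \<times> UNIV"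
        unfolding SS_def TT_def by auto
    qed simp
    also have "\<dots> = card SS * card TT * 2 ^ k" using assms(7) by (simp add: card_cartesian_product)
    also have "\<dots> \<le> 2 * 2 * 2 ^ k" using cS cT by (intro mult_right_mono mult_mono) auto
    finally have cK: "card K0 \<le> 4 * 2 ^ k" by simp
    define rep where "rep \<beta> = (SOME x. cN x = \<beta>)" for \<beta>
    have "card (UNIV::'c set) \<le> card ((UNIV::'b set) \<times> K0)"
    proof (rule card_inj_on_le[where f="\<lambda>x. (cN x, x - rep (cN x))"])
      show "inj_on (\<lambda>x. (cN x, x - rep (cN x))) UNIV"
        by (rule inj_onI) auto
      show "(\<lambda>x. (cN x, x - rep (cN x))) ` UNIV \<subseteq> UNIV \<times> K0"
      proof -
        have "x - rep (cN x) \<in> K0" for x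
        proof -
          have "cN (rep (cN x)) = cN x" unfolding rep_def by (rule someI[of _ x]) simp
          then show "x - rep (cN x) \<in> K0" using lin_diff[OF cadd] by (simp add: K0_def)
        qed
        then show ?thesis by auto
      qed
    qed simp
    also have "\<dots> = 2 ^ k * card K0" using assms(7) by (simp add: card_cartesian_product)
    finally have "2 ^ (m + k) \<le> (2::nat) ^ k * (4 * 2 ^ k)"
      using assms(8) cK by (metis mult_le_mono2 order_trans)
    also have "\<dots> = 2 ^ (k + k + 2)" by (simp add: power_add)
    finally have "m + k \<le> k + k + 2" using power_le_imp_le_exp[of "2::nat" "m + k" "k + k + 2"] by linarith
    then show False using assms(5) by simp
  qed
qed

end
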